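(* Let $\kappa$ be a regular infinite cardinal and $\mu$ a singular cardinal with $\mathrm{cf}(\mu)=\kappa$. Then $\mathfrak b({}^{\mu}\kappa,\le_\kappa)=\mathfrak b({}^{\mu}\kappa,\le_{\mathrm{all}})=\kappa$ and $\mathfrak b({}^{\mu}\kappa,\le_\mu)=\mathfrak b({}^{\mu}\kappa,\le_{\mathrm{bd}})=\kappa^+$.
   Context: For $f,g\in{}^{\mu}\kappa$ (functions $\mu\to\kappa$): $f\le_{\mathrm{bd}}g$ if $\{\alpha<\mu: g(\alpha)<f(\alpha)\}$ is bounded in $\mu$; for a cardinal $\nu$, $f\le_\nu g$ if $|\{\alpha<\mu: g(\alpha)<f(\alpha)\}|<\nu$; $f\le_{\mathrm{all}}g$ if $f(\alpha)\le g(\alpha)$ for all $\alpha<\mu$. For such a relation $\le_\bullet$, $\mathfrak b({}^{\mu}\kappa,\le_\bullet)$ is the least size of a set $B\subseteq{}^{\mu}\kappa$ for which there is no $g\in{}^{\mu}\kappa$ with $f\le_\bullet g$ for all $f\in B$. *)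

theory Defs
  imports Main "HOL-Library.FuncSet"
begin

unbundle cardinal_syntax

(* Cardinals are represented as cardinal orders (initial-ordinal well-orders) r,
   with underlying set Field r; ordinals below the cardinal are elements of Field r. *)

definition cf_is :: "'m rel \<Rightarrow> 'c rel \<Rightarrow> bool" where
  "cf_is m c \<equiv> (\<exists>K. K \<subseteq> Field m \<and> cofinal K m \<and> (card_of K) =o c)
              \<and> (\<forall>K. K \<subseteq> Field m \<and> cofinal K m \<longrightarrow> c \<le>o (card_of K))"

definition funs :: "'m rel \<Rightarrow> 'k rel \<Rightarrow> ('m \<Rightarrow> 'k) set" where
  "funs m k = Field m \<rightarrow>\<^sub>E Field k"

definition below_set :: "'m rel \<Rightarrow> 'k rel \<Rightarrow> ('m \<Rightarrow> 'k) \<Rightarrow> ('m \<Rightarrow> 'k) \<Rightarrow> 'm set" where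
  "below_set m k f g = {\<alpha> \<in> Field m. (g \<alpha>, f \<alpha>) \<in> k \<and> g \<alpha> \<noteq> f \<alpha>}"

definition le_bd :: "'m rel \<Rightarrow> 'k rel \<Rightarrow> ('m \<Rightarrow> 'k) \<Rightarrow> ('m \<Rightarrow> 'k) \<Rightarrow> bool" where
  "le_bd m k f g \<longleftrightarrow> (\<exists>\<beta>\<in>Field m. \<forall>\<alpha>\<in>below_set m k f g. (\<alpha>, \<beta>) \<in> m)"

definition le_card :: "'n rel \<Rightarrow> 'm rel \<Rightarrow> 'k rel \<Rightarrow> ('m \<Rightarrow> 'k) \<Rightarrow> ('m \<Rightarrow> 'k) \<Rightarrow> bool" where
  "le_card \<nu> m k f g \<longleftrightarrow> (card_of (below_set m k f g)) <o \<nu>"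

definition le_all :: "'m rel \<Rightarrow> 'k rel \<Rightarrow> ('m \<Rightarrow> 'k) \<Rightarrow> ('m \<Rightarrow> 'k) \<Rightarrow> bool" where
  "le_all m k f g \<longleftrightarrow> (\<forall>\<alpha>\<in>Field m. (f \<alpha>, g \<alpha>) \<in> k)"

definition unbounded_family :: "('a \<Rightarrow> 'a \<Rightarrow> bool) \<Rightarrow> 'a set \<Rightarrow> 'a set \<Rightarrow> bool" where
  "unbounded_family R F B \<longleftrightarrow> B \<subseteq> F \<and> \<not> (\<exists>g\<in>F. \<forall>f\<in>B. R f g)"

definition bnum_is :: "('a \<Rightarrow> 'a \<Rightarrow> bool) \<Rightarrow> 'a set \<Rightarrow> 'c rel \<Rightarrow> bool" where
  "bnum_is R F c \<longleftrightarrow> (\<exists>B. unbounded_family R F B \<and> (card_of B) =o c)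
                     \<and> (\<forall>B. unbounded_family R F B \<longrightarrow> c \<le>o (card_of B))"

end

theory Submission imports Defs begin

lemma co_wo: "Card_order r \<Longrightarrow> Well_order r"
  unfolding card_order_on_def by simp

lemma co_lin: "Card_order r \<Longrightarrow> Linear_order r"
  unfolding card_order_on_def well_order_on_def by simp

lemma co_po: "Card_order r \<Longrightarrow> Refl r \<and> trans r \<and> antisym r \<and> Total r"
  using co_lin[of r] unfolding linear_order_on_def partial_order_on_def preorder_on_def by simp

lemma co_total: assumes "Card_order r" "a \<in> Field r" "b \<in> Field r" "(a,b) \<notin> r"
  shows "(b,a) \<in> r"
proof -
  have "Total r" "Refl r" using co_po[OF assms(1)] by auto
  then show ?thesis using assms(2-4) unfolding total_on_def refl_on_def by metis
qed

lemma co_antisym: assumes "Card_order r" "(a,b) \<in> r" "(b,a) \<in> r" shows "a = b"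
  using co_po[OF assms(1)] assms(2,3) antisymD by metis

lemma co_trans: assumes "Card_order r" "(a,b) \<in> r" "(b,c) \<in> r" shows "(a,c) \<in> r"
  using co_po[OF assms(1)] assms(2,3) transD by metis

lemma co_refl: assumes "Card_order r" "a \<in> Field r" shows "(a,a) \<in> r"
  using co_po[OF assms(1)] assms(2) refl_onD by metis

lemma under_small: assumes "Card_order r" "infinite (Field r)" "a \<in> Field r"
  shows "|under r a| <o r"
proof -
  obtain b where b: "b \<in> Field r" "a \<noteq> b" "(a,b) \<in> r"
    using infinite_Card_order_limit[OF assms(1) assms(2) assms(3)] by blast
  have "under r a \<subseteq> underS r b"
    unfolding under_def underS_def using b co_trans[OF assms(1)] co_antisym[OF assms(1)] by blast
  then have "|under r a| \<le>o |underS r b|" by (rule card_of_mono1)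
  also have "|underS r b| <o r" using card_of_underS[OF assms(1) b(1)] .
  finally show ?thesis .
qed

lemma bounded_not_cofinal: assumes "Card_order r" "S \<subseteq> Field r" "\<not> cofinal S r"
  shows "\<exists>a\<in>Field r. \<forall>b\<in>S. (b,a) \<in> r"
proof -
  obtain a where a: "a \<in> Field r" "\<forall>b\<in>S. \<not> (a \<noteq> b \<and> (a,b) \<in> r)"
    using assms(3) unfolding cofinal_def by blast
  show ?thesis
  proof (intro bexI[OF _ a(1)] ballI)
    fix b assume b: "b \<in> S"
    show "(b,a) \<in> r"
    proof (cases "a = b")
      case True then show ?thesis using co_refl[OF assms(1) a(1)] by simp
    next
      case False
      then have "(a,b) \<notin> r" using a(2) b by blast
      then show ?thesis using co_total[OF assms(1) a(1)] b assms(2) by blast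
    qed
  qed
qed

lemma small_bounded_reg: assumes "Card_order r" "regularCard r" "S \<subseteq> Field r" "|S| <o r"
  shows "\<exists>a\<in>Field r. \<forall>b\<in>S. (b,a) \<in> r"
proof -
  have "\<not> cofinal S r"
  proof
    assume "cofinal S r"
    then have "|S| =o r" using assms(2,3) unfolding regularCard_def by blast
    then show False using not_ordLess_ordIso assms(4) by blast
  qed
  then show ?thesis using bounded_not_cofinal assms(1,3) by blast
qed

lemma small_bounded_cf: assumes "Card_order m" "cf_is m k" "S \<subseteq> Field m" "|S| <o k"
  shows "\<exists>a\<in>Field m. \<forall>b\<in>S. (b,a) \<in> m"
proof -
  have "\<not> cofinal S m"
  proof
    assume "cofinal S m"
    then have "k \<le>o |S|" using assms(2,3) unfolding cf_is_def by blast
    then show False using not_ordLess_ordLeq assms(4) by blast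
  qed
  then show ?thesis using bounded_not_cofinal assms(1,3) by blast
qed

lemma union_small: assumes "Card_order m" "|I| <o m" "\<forall>i\<in>I. |A i| \<le>o |U|" "|U| <o m" "infinite I"
  shows "|\<Union>i\<in>I. A i| <o m"
proof (cases "|U| \<le>o |I|")
  case True
  have "\<forall>i\<in>I. |A i| \<le>o |I|"
  proof
    fix i assume "i \<in> I"
    then have "|A i| \<le>o |U|" using assms(3) by blast
    then show "|A i| \<le>o |I|" using True by (rule ordLeq_transitive)
  qed
  then have "|\<Union>i\<in>I. A i| \<le>o |I|"
    by (rule card_of_UNION_ordLeq_infinite[OF assms(5) ordLeq_refl[OF card_of_Card_order]])
  then show ?thesis using assms(2) by (rule ordLeq_ordLess_trans)
next
  case False
  then have 1: "|I| \<le>o |U|" using ordLeq_total[OF card_of_Well_order card_of_Well_order] by blast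
  then have "infinite U" using assms(5) by (rule card_of_ordLeq_infinite)
  then have "|\<Union>i\<in>I. A i| \<le>o |U|"
    using card_of_UNION_ordLeq_infinite 1 assms(3) by blast
  then show ?thesis using assms(4) by (rule ordLeq_ordLess_trans)
qed

lemma bnum_intro: assumes "Card_order c" "\<And>B. unbounded_family R F B \<Longrightarrow> c \<le>o |B|"
  "unbounded_family R F B0" "|B0| \<le>o c"
  shows "bnum_is R F c"
proof -
  have "|B0| =o c" using assms(2)[OF assms(3)] assms(4) by (simp add: ordIso_iff_ordLeq)
  then show ?thesis unfolding bnum_is_def using assms(2,3) by blast
qed



locale S17 =
  fixes k :: "'k rel" and m :: "'m rel"
  assumes kC: "Card_order k" and kI: "infinite (Field k)" and kR: "regularCard k"
    and mC: "Card_order m" and mI: "infinite (Field m)" and mR: "\<not> regularCard m"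
    and cf: "cf_is m k"
begin

lemma k_less_m: "k <o m"
proof -
  obtain K where K: "K \<subseteq> Field m" "cofinal K m" "\<not> |K| =o m"
    using mR unfolding regularCard_def by blast
  have 1: "k \<le>o |K|" using cf K(1,2) unfolding cf_is_def by (elim conjE allE impE) auto
  have "|K| \<le>o m"
    by (rule ordLeq_ordIso_trans[OF card_of_mono1[OF K(1)] card_of_Field_ordIso[OF mC]])
  then have "|K| <o m \<or> |K| =o m" by (simp only: ordLeq_iff_ordLess_or_ordIso)
  then have "|K| <o m" using K(3) by (elim disjE) auto
  then show ?thesis by (rule ordLeq_ordLess_trans[OF 1])
qed

lemma funs_val: "f \<in> funs m k \<Longrightarrow> \<alpha> \<in> Field m \<Longrightarrow> f \<alpha> \<in> Field k"
  unfolding funs_def by auto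

lemma empty_less_k: "|{}| <o k"
  using finite_ordLess_infinite[OF card_of_Well_order co_wo[OF kC], of "{}"] kI by (simp add: Field_card_of)

lemma all_bound: assumes "B \<subseteq> funs m k" "|B| <o k"
  shows "\<exists>g\<in>funs m k. \<forall>f\<in>B. le_all m k f g"
proof -
  have ex: "\<exists>a. a \<in> Field k \<and> (\<forall>f\<in>B. (f \<alpha>, a) \<in> k)" if \<alpha>: "\<alpha> \<in> Field m" for \<alpha>
  proof -
    have "(\<lambda>f. f \<alpha>) ` B \<subseteq> Field k" using assms(1) funs_val \<alpha> by blast
    moreover have "|(\<lambda>f. f \<alpha>) ` B| <o k" using card_of_image assms(2) ordLeq_ordLess_trans by blast
    ultimately obtain a where "a \<in> Field k" "\<forall>b\<in>(\<lambda>f. f \<alpha>) ` B. (b,a) \<in> k"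
      using small_bounded_reg[OF kC kR] by blast
    then show ?thesis by blast
  qed
  define g where "g = restrict (\<lambda>\<alpha>. SOME a. a \<in> Field k \<and> (\<forall>f\<in>B. (f \<alpha>, a) \<in> k)) (Field m)"
  have g: "g \<alpha> \<in> Field k \<and> (\<forall>f\<in>B. (f \<alpha>, g \<alpha>) \<in> k)" if "\<alpha> \<in> Field m" for \<alpha>
    using someI_ex[OF ex[OF that]] that unfolding g_def by simp
  have "g \<in> funs m k" unfolding funs_def g_def using g by (simp add: g_def)
  moreover have "\<forall>f\<in>B. le_all m k f g" unfolding le_all_def using g by blast
  ultimately show ?thesis by blast
qed

lemma le_all_card: "le_all m k f g \<Longrightarrow> le_card k m k f g"
proof -
  assume a: "le_all m k f g"
  have "below_set m k f g = {}"
  proof (rule equals0I)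
    fix \<alpha> assume "\<alpha> \<in> below_set m k f g"
    then have "\<alpha> \<in> Field m" "(g \<alpha>, f \<alpha>) \<in> k" "g \<alpha> \<noteq> f \<alpha>" unfolding below_set_def by auto
    moreover have "(f \<alpha>, g \<alpha>) \<in> k" using a calculation(1) unfolding le_all_def by blast
    ultimately show False using co_antisym[OF kC] by blast
  qed
  then show ?thesis unfolding le_card_def using empty_less_k by simp
qed

lemma lower_k: assumes "unbounded_family (le_card k m k) (funs m k) B" shows "k \<le>o |B|"
proof (rule ccontr)
  assume "\<not> k \<le>o |B|"
  then have "|B| <o k" using not_ordLeq_iff_ordLess[OF card_of_Well_order co_wo[OF kC]] by blast
  moreover have "B \<subseteq> funs m k" using assms unfolding unbounded_family_def by blast
  ultimately obtain g where "g \<in> funs m k" "\<forall>f\<in>B. le_all m k f g" using all_bound by blast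
  then have "\<exists>g\<in>funs m k. \<forall>f\<in>B. le_card k m k f g" using le_all_card by blast
  then show False using assms unfolding unbounded_family_def by blast
qed

lemma lower_k_all: assumes "unbounded_family (le_all m k) (funs m k) B" shows "k \<le>o |B|"
proof (rule ccontr)
  assume "\<not> k \<le>o |B|"
  then have "|B| <o k" using not_ordLeq_iff_ordLess[OF card_of_Well_order co_wo[OF kC]] by blast
  moreover have "B \<subseteq> funs m k" using assms unfolding unbounded_family_def by blast
  ultimately obtain g where "g \<in> funs m k" "\<forall>f\<in>B. le_all m k f g" using all_bound by blast
  then show False using assms unfolding unbounded_family_def by blast
qed

definition "Cst = (\<lambda>\<xi>. restrict (\<lambda>\<alpha>. \<xi>) (Field m)) ` Field k"

lemma C_sub: "Cst \<subseteq> funs m k"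
  unfolding Cst_def funs_def by auto

lemma C_card: "|Cst| \<le>o k"
  unfolding Cst_def by (rule ordLeq_ordIso_trans[OF card_of_image card_of_Field_ordIso[OF kC]])

lemma C_unb: "unbounded_family (le_card k m k) (funs m k) Cst"
  unfolding unbounded_family_def
proof (intro conjI C_sub notI)
  assume "\<exists>g\<in>funs m k. \<forall>f\<in>Cst. le_card k m k f g"
  then obtain g where g: "g \<in> funs m k" "\<forall>f\<in>Cst. le_card k m k f g" by blast
  define A where "A = (\<lambda>\<xi>. below_set m k (restrict (\<lambda>\<alpha>. \<xi>) (Field m)) g)"
  have A: "|A \<xi>| \<le>o |Field k|" if "\<xi> \<in> Field k" for \<xi>
  proof -
    have "|A \<xi>| <o k" using g(2) that unfolding A_def Cst_def le_card_def by blast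
    then show ?thesis
      by (rule ordLeq_ordIso_trans[OF ordLess_imp_ordLeq ordIso_symmetric[OF card_of_Field_ordIso[OF kC]]])
  qed
  have "Field m \<subseteq> (\<Union>\<xi>\<in>Field k. A \<xi>)"
  proof
    fix \<alpha> assume \<alpha>: "\<alpha> \<in> Field m"
    then have "g \<alpha> \<in> Field k" using funs_val g(1) by blast
    then obtain \<xi> where "\<xi> \<in> Field k" "g \<alpha> \<noteq> \<xi>" "(g \<alpha>, \<xi>) \<in> k"
      using infinite_Card_order_limit[OF kC kI] by blast
    then show "\<alpha> \<in> (\<Union>\<xi>\<in>Field k. A \<xi>)" unfolding A_def below_set_def using \<alpha> by auto
  qed
  moreover have "|\<Union>\<xi>\<in>Field k. A \<xi>| \<le>o |Field k|"
    using card_of_UNION_ordLeq_infinite[OF kI ordLeq_refl[OF card_of_Card_order]] A by blast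
  ultimately have "|Field m| \<le>o |Field k|"
    using card_of_mono1 ordLeq_transitive by blast
  then have "m \<le>o |Field k|"
    by (rule ordIso_ordLeq_trans[OF ordIso_symmetric[OF card_of_Field_ordIso[OF mC]]])
  then have "m \<le>o k" by (rule ordLeq_ordIso_trans[OF _ card_of_Field_ordIso[OF kC]])
  then show False using k_less_m not_ordLess_ordLeq by blast
qed

lemma C_unb_all: "unbounded_family (le_all m k) (funs m k) Cst"
  using C_unb le_all_card unfolding unbounded_family_def by blast

lemma bd_card: assumes "le_bd m k f g" shows "le_card m m k f g"
proof -
  obtain \<beta> where \<beta>: "\<beta> \<in> Field m" "\<forall>\<alpha>\<in>below_set m k f g. (\<alpha>, \<beta>) \<in> m"
    using assms unfolding le_bd_def by blast
  have "below_set m k f g \<subseteq> under m \<beta>" using \<beta>(2) unfolding under_def by blast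
  then have "|below_set m k f g| \<le>o |under m \<beta>|" by (rule card_of_mono1)
  then show ?thesis unfolding le_card_def using under_small[OF mC mI \<beta>(1)] by (rule ordLeq_ordLess_trans)
qed

lemma bd_bound: assumes "B \<subseteq> funs m k" "|B| \<le>o k"
  shows "\<exists>g\<in>funs m k. \<forall>f\<in>B. le_bd m k f g"
proof -
  obtain K where K: "K \<subseteq> Field m" "cofinal K m" "|K| =o k" using cf unfolding cf_is_def by blast
  have "|Field k| =o |K|"
    by (rule ordIso_transitive[OF card_of_Field_ordIso[OF kC] ordIso_symmetric[OF K(3)]])
  then obtain c where c: "bij_betw c (Field k) K" using card_of_ordIso by blast
  then have cK: "c ` Field k = K" unfolding bij_betw_def by blast
  have "|B| \<le>o |Field k|"
    by (rule ordLeq_ordIso_trans[OF assms(2) ordIso_symmetric[OF card_of_Field_ordIso[OF kC]]])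
  then obtain e where e: "inj_on e B" "e ` B \<subseteq> Field k" using card_of_ordLeq[of B "Field k"] by blast
  have tex: "\<exists>\<xi>. \<xi> \<in> Field k \<and> (\<alpha>, c \<xi>) \<in> m" if \<alpha>: "\<alpha> \<in> Field m" for \<alpha>
  proof -
    obtain b where "b \<in> K" "(\<alpha>, b) \<in> m" using K(2) \<alpha> unfolding cofinal_def by blast
    then show ?thesis using cK by blast
  qed
  define \<tau> where "\<tau> = (\<lambda>\<alpha>. SOME \<xi>. \<xi> \<in> Field k \<and> (\<alpha>, c \<xi>) \<in> m)"
  have \<tau>: "\<tau> \<alpha> \<in> Field k \<and> (\<alpha>, c (\<tau> \<alpha>)) \<in> m" if "\<alpha> \<in> Field m" for \<alpha>
    unfolding \<tau>_def using someI_ex[OF tex[OF that]] .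
  have gex: "\<exists>a. a \<in> Field k \<and> (\<forall>f\<in>B. (e f, \<tau> \<alpha>) \<in> k \<longrightarrow> (f \<alpha>, a) \<in> k)"
    if \<alpha>: "\<alpha> \<in> Field m" for \<alpha>
  proof -
    let ?B = "{f\<in>B. (e f, \<tau> \<alpha>) \<in> k}"
    let ?S = "(\<lambda>f. f \<alpha>) ` ?B"
    have Ssub: "?S \<subseteq> Field k" using assms(1) funs_val \<alpha> by blast
    have "inj_on e ?B" using e(1) by (rule inj_on_subset) blast
    moreover have "e ` ?B \<subseteq> under k (\<tau> \<alpha>)" unfolding under_def by blast
    ultimately have "|?B| \<le>o |under k (\<tau> \<alpha>)|" using card_of_ordLeq by blast
    moreover have "|under k (\<tau> \<alpha>)| <o k" using under_small[OF kC kI] \<tau>[OF \<alpha>] by blast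
    ultimately have "|?B| <o k" by (rule ordLeq_ordLess_trans)
    then have "|?S| <o k" by (rule ordLeq_ordLess_trans[OF card_of_image])
    then obtain a where "a \<in> Field k" "\<forall>b\<in>?S. (b,a) \<in> k"
      using small_bounded_reg[OF kC kR Ssub] by blast
    then show ?thesis by blast
  qed
  define g where "g = restrict (\<lambda>\<alpha>. SOME a. a \<in> Field k \<and> (\<forall>f\<in>B. (e f, \<tau> \<alpha>) \<in> k \<longrightarrow> (f \<alpha>, a) \<in> k)) (Field m)"
  have g: "g \<alpha> \<in> Field k \<and> (\<forall>f\<in>B. (e f, \<tau> \<alpha>) \<in> k \<longrightarrow> (f \<alpha>, g \<alpha>) \<in> k)" if "\<alpha> \<in> Field m" for \<alpha>
    using someI_ex[OF gex[OF that]] that unfolding g_def by simp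
  have gf: "g \<in> funs m k" unfolding funs_def using g by (simp add: g_def)
  show ?thesis
  proof (intro bexI[OF _ gf] ballI)
    fix f assume f: "f \<in> B"
    have ef: "e f \<in> Field k" using e f by blast
    have usub: "under k (e f) \<subseteq> Field k" by (rule under_Field)
    then have Csub: "c ` under k (e f) \<subseteq> Field m" using cK K(1) by blast
    have "|c ` under k (e f)| <o k"
      by (rule ordLeq_ordLess_trans[OF card_of_image under_small[OF kC kI ef]])
    then obtain a where a: "a \<in> Field m" "\<forall>b\<in>c ` under k (e f). (b,a) \<in> m"
      using small_bounded_cf[OF mC cf Csub] by blast
    show "le_bd m k f g" unfolding le_bd_def
    proof (intro bexI[OF _ a(1)] ballI)
      fix \<alpha> assume "\<alpha> \<in> below_set m k f g"
      then have \<alpha>: "\<alpha> \<in> Field m" "(g \<alpha>, f \<alpha>) \<in> k" "g \<alpha> \<noteq> f \<alpha>" unfolding below_set_def by auto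
      have "(e f, \<tau> \<alpha>) \<notin> k"
      proof
        assume "(e f, \<tau> \<alpha>) \<in> k"
        then have "(f \<alpha>, g \<alpha>) \<in> k" using g[OF \<alpha>(1)] f by blast
        then show False using co_antisym[OF kC] \<alpha>(2,3) by blast
      qed
      then have "(\<tau> \<alpha>, e f) \<in> k" using co_total[OF kC ef] \<tau>[OF \<alpha>(1)] by blast
      then have "c (\<tau> \<alpha>) \<in> c ` under k (e f)" unfolding under_def by blast
      then have "(c (\<tau> \<alpha>), a) \<in> m" using a(2) by blast
      then show "(\<alpha>, a) \<in> m" using co_trans[OF mC] \<tau>[OF \<alpha>(1)] by blast
    qed
  qed
qed

lemma lower_bd: assumes "unbounded_family (le_bd m k) (funs m k) B" shows "cardSuc k \<le>o |B|"
proof -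
  have "\<not> |B| \<le>o k"
  proof
    assume "|B| \<le>o k"
    moreover have "B \<subseteq> funs m k" using assms unfolding unbounded_family_def by blast
    ultimately obtain g where "g \<in> funs m k" "\<forall>f\<in>B. le_bd m k f g" using bd_bound by blast
    then show False using assms unfolding unbounded_family_def by blast
  qed
  then have "k <o |B|" using not_ordLeq_iff_ordLess[OF co_wo[OF kC] card_of_Well_order] by blast
  then show ?thesis using cardSuc_ordLess_ordLeq[OF kC card_of_Card_order] by blast
qed

lemma unb_card_bd: assumes "unbounded_family (le_card m m k) (funs m k) B"
  shows "unbounded_family (le_bd m k) (funs m k) B"
  using assms bd_card unfolding unbounded_family_def by blast

lemma lower_card_m: assumes "unbounded_family (le_card m m k) (funs m k) B" shows "cardSuc k \<le>o |B|"
  using lower_bd[OF unb_card_bd[OF assms]] .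

lemma s_facts: "Card_order (cardSuc k)" "infinite (Field (cardSuc k))" "regularCard (cardSuc k)"
  "k <o cardSuc k" "cardSuc k <o m"
proof -
  show sC: "Card_order (cardSuc k)" by (rule cardSuc_Card_order[OF kC])
  show sI: "infinite (Field (cardSuc k))" using cardSuc_finite[OF kC] kI by simp
  show sR: "regularCard (cardSuc k)" by (rule infinite_cardSuc_regularCard[OF kI kC])
  show "k <o cardSuc k" by (rule cardSuc_greater[OF kC])
  have le: "cardSuc k \<le>o m" by (rule cardSuc_least[OF kC mC k_less_m])
  have "\<not> cardSuc k =o m"
  proof
    assume "cardSuc k =o m"
    moreover have "Cinfinite (cardSuc k)" using sC sI unfolding cinfinite_def by simp
    ultimately have "regularCard m" using sR regularCard_ordIso by blast
    then show False using mR by blast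
  qed
  then show "cardSuc k <o m" using le by (simp add: ordLeq_iff_ordLess_or_ordIso)
qed

lemma fam_exists: "\<exists>Fm. unbounded_family (le_card m m k) (funs m k) Fm \<and> |Fm| \<le>o cardSuc k"
proof -
  let ?s = "cardSuc k"
  note sC = s_facts(1) and sI = s_facts(2) and sR = s_facts(3) and ks = s_facts(4) and sm = s_facts(5)
  have "|Field ?s| \<le>o |Field m|" using card_of_mono2[OF ordLess_imp_ordLeq[OF sm]] .
  moreover have "Field ?s \<noteq> {}" using sI by auto
  ultimately have "|Field ?s \<times> Field m| =o |Field m|" using card_of_Times_infinite[OF mI] by blast
  then obtain p where p: "bij_betw p (Field m) (Field ?s \<times> Field m)"
    using card_of_ordIso ordIso_symmetric by blast
  have pimg: "p ` Field m = Field ?s \<times> Field m" using p unfolding bij_betw_def by blast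
  have pfst: "fst (p \<alpha>) \<in> Field ?s" if "\<alpha> \<in> Field m" for \<alpha>
  proof -
    have "p \<alpha> \<in> Field ?s \<times> Field m" using pimg that by blast
    then show ?thesis by (simp add: mem_Times_iff)
  qed
  have pi_ex: "\<exists>h. inj_on h (under ?s \<eta>) \<and> h ` under ?s \<eta> \<subseteq> Field k" if \<eta>: "\<eta> \<in> Field ?s" for \<eta>
  proof -
    have "|under ?s \<eta>| <o ?s" by (rule under_small[OF sC sI \<eta>])
    then have "|under ?s \<eta>| \<le>o k" using cardSuc_ordLeq_ordLess[OF kC card_of_Card_order] by blast
    then have "|under ?s \<eta>| \<le>o |Field k|"
      by (rule ordLeq_ordIso_trans[OF _ ordIso_symmetric[OF card_of_Field_ordIso[OF kC]]])
    then show ?thesis using card_of_ordLeq by blast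
  qed
  define \<pi> where "\<pi> = (\<lambda>\<eta>. SOME h. inj_on h (under ?s \<eta>) \<and> h ` under ?s \<eta> \<subseteq> Field k)"
  have \<pi>: "inj_on (\<pi> \<eta>) (under ?s \<eta>) \<and> \<pi> \<eta> ` under ?s \<eta> \<subseteq> Field k" if "\<eta> \<in> Field ?s" for \<eta>
    unfolding \<pi>_def using someI_ex[OF pi_ex[OF that]] .
  obtain z0 where z0: "z0 \<in> Field k" using kI by (metis finite.emptyI ex_in_conv)
  define F where "F = (\<lambda>\<xi>. restrict (\<lambda>\<alpha>. if \<xi> \<in> under ?s (fst (p \<alpha>)) then \<pi> (fst (p \<alpha>)) \<xi> else z0) (Field m))"
  have Fin: "F ` Field ?s \<subseteq> funs m k"
  proof
    fix f assume "f \<in> F ` Field ?s"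
    then obtain \<xi> where f: "f = F \<xi>" by blast
    have "(if \<xi> \<in> under ?s (fst (p \<alpha>)) then \<pi> (fst (p \<alpha>)) \<xi> else z0) \<in> Field k"
      if "\<alpha> \<in> Field m" for \<alpha>
      using \<pi>[OF pfst[OF that]] z0 by auto
    then show "f \<in> funs m k" unfolding f F_def funs_def by simp
  qed
  have Fcard: "|F ` Field ?s| \<le>o ?s"
    by (rule ordLeq_ordIso_trans[OF card_of_image card_of_Field_ordIso[OF sC]])
  have unb: "\<not> (\<exists>g\<in>funs m k. \<forall>f\<in>F ` Field ?s. le_card m m k f g)"
  proof
    assume "\<exists>g\<in>funs m k. \<forall>f\<in>F ` Field ?s. le_card m m k f g"
    then obtain g where g: "g \<in> funs m k" "\<forall>\<xi>\<in>Field ?s. |below_set m k (F \<xi>) g| <o m"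
      unfolding le_card_def by blast
    define Bd where "Bd = (\<lambda>\<xi>. below_set m k (F \<xi>) g)"
    obtain K where K: "K \<subseteq> Field m" "cofinal K m" "|K| =o k" using cf unfolding cf_is_def by blast
    have sig_ex: "\<exists>b. b \<in> K \<and> |Bd \<xi>| \<le>o |under m b|" if \<xi>: "\<xi> \<in> Field ?s" for \<xi>
    proof -
      have "|Bd \<xi>| <o m" using g(2) \<xi> unfolding Bd_def by blast
      then obtain a where a: "a \<in> Field m" "|Bd \<xi>| =o Restr m (underS m a)"
        using ordLess_iff_ordIso_Restr[OF co_wo[OF mC] card_of_Well_order] by blast
      have "|Field (card_of (Bd \<xi>))| \<le>o |Field (Restr m (underS m a))|"
        by (rule card_of_mono2[OF ordIso_imp_ordLeq[OF a(2)]])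
      then have 1: "|Bd \<xi>| \<le>o |Field (Restr m (underS m a))|" by (simp add: Field_card_of)
      have 2: "|Field (Restr m (underS m a))| \<le>o |underS m a|" by (rule card_of_mono1[OF Field_Restr_subset])
      obtain b where b: "b \<in> K" "(a, b) \<in> m" using K(2) a(1) unfolding cofinal_def by blast
      have "underS m a \<subseteq> under m b" unfolding underS_def under_def using b(2) co_trans[OF mC] by blast
      then have 3: "|underS m a| \<le>o |under m b|" by (rule card_of_mono1)
      have "|Bd \<xi>| \<le>o |under m b|" by (rule ordLeq_transitive[OF ordLeq_transitive[OF 1 2] 3])
      then show ?thesis using b(1) by blast
    qed
    define \<sigma> where "\<sigma> = (\<lambda>\<xi>. SOME b. b \<in> K \<and> |Bd \<xi>| \<le>o |under m b| )"
    have \<sigma>: "\<sigma> \<xi> \<in> K \<and> |Bd \<xi>| \<le>o |under m (\<sigma> \<xi>)|" if "\<xi> \<in> Field ?s" for \<xi>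
      unfolding \<sigma>_def using someI_ex[OF sig_ex[OF that]] .
    have Kk: "|K| \<le>o |Field k|"
      by (rule ordIso_imp_ordLeq[OF ordIso_transitive[OF K(3) ordIso_symmetric[OF card_of_Field_ordIso[OF kC]]]])
    have "\<exists>b\<in>K. \<not> |{\<xi>\<in>Field ?s. \<sigma> \<xi> = b}| \<le>o |Field k|"
    proof (rule ccontr)
      assume "\<not> ?thesis"
      then have all: "\<forall>b\<in>K. |{\<xi>\<in>Field ?s. \<sigma> \<xi> = b}| \<le>o |Field k|" by blast
      have eq: "Field ?s = (\<Union>b\<in>K. {\<xi>\<in>Field ?s. \<sigma> \<xi> = b})" using \<sigma> by blast
      have "|\<Union>b\<in>K. {\<xi>\<in>Field ?s. \<sigma> \<xi> = b}| \<le>o |Field k|"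
        by (rule card_of_UNION_ordLeq_infinite[OF kI Kk all])
      then have "|Field ?s| \<le>o |Field k|" using eq by simp
      then have "?s \<le>o |Field k|"
        by (rule ordIso_ordLeq_trans[OF ordIso_symmetric[OF card_of_Field_ordIso[OF sC]]])
      then have "?s \<le>o k" by (rule ordLeq_ordIso_trans[OF _ card_of_Field_ordIso[OF kC]])
      then show False using ks not_ordLess_ordLeq by blast
    qed
    then obtain b where b: "b \<in> K" "\<not> |{\<xi>\<in>Field ?s. \<sigma> \<xi> = b}| \<le>o |Field k|" by blast
    let ?X = "{\<xi>\<in>Field ?s. \<sigma> \<xi> = b}"
    have "|Field k| <o |?X|" using b(2) not_ordLeq_iff_ordLess[OF card_of_Well_order card_of_Well_order] by blast
    then obtain h where h: "inj_on h (Field k)" "h ` Field k \<subseteq> ?X"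
      using card_of_ordLeq[of "Field k" ?X] ordLess_imp_ordLeq by blast
    let ?Y = "h ` Field k"
    have "bij_betw h (Field k) ?Y" using h(1) by (rule inj_on_imp_bij_betw)
    then have "|Field k| =o |?Y|" using card_of_ordIso by blast
    then have Yk: "|?Y| =o |Field k|" by (rule ordIso_symmetric)
    have Yk2: "|?Y| =o k" by (rule ordIso_transitive[OF Yk card_of_Field_ordIso[OF kC]])
    have Ys: "?Y \<subseteq> Field ?s" using h(2) by blast
    have "|?Y| <o ?s" by (rule ordIso_ordLess_trans[OF Yk2 ks])
    then obtain \<eta> where \<eta>: "\<eta> \<in> Field ?s" "\<forall>\<xi>\<in>?Y. (\<xi>, \<eta>) \<in> ?s"
      using small_bounded_reg[OF sC sR Ys] by blast
    have Yu: "?Y \<subseteq> under ?s \<eta>" using \<eta>(2) unfolding under_def by blast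
    define A where "A = {\<alpha> \<in> Field m. fst (p \<alpha>) = \<eta>}"
    have "Field m \<subseteq> (\<lambda>\<alpha>. snd (p \<alpha>)) ` A"
    proof
      fix \<beta> assume "\<beta> \<in> Field m"
      then have "(\<eta>, \<beta>) \<in> p ` Field m" using pimg \<eta>(1) by blast
      then obtain \<alpha> where "\<alpha> \<in> Field m" "p \<alpha> = (\<eta>, \<beta>)" by force
      then show "\<beta> \<in> (\<lambda>\<alpha>. snd (p \<alpha>)) ` A" unfolding A_def by force
    qed
    then have mA: "|Field m| \<le>o |A|" by (rule surj_imp_ordLeq)
    have AU: "A \<subseteq> (\<Union>\<xi>\<in>?Y. Bd \<xi>)"
    proof
      fix \<alpha> assume \<alpha>A: "\<alpha> \<in> A"
      then have \<alpha>: "\<alpha> \<in> Field m" "fst (p \<alpha>) = \<eta>" unfolding A_def by auto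
      show "\<alpha> \<in> (\<Union>\<xi>\<in>?Y. Bd \<xi>)"
      proof (rule ccontr)
        assume na: "\<alpha> \<notin> (\<Union>\<xi>\<in>?Y. Bd \<xi>)"
        have g\<alpha>: "g \<alpha> \<in> Field k" using funs_val[OF g(1) \<alpha>(1)] .
        have "\<pi> \<eta> ` ?Y \<subseteq> under k (g \<alpha>)"
        proof
          fix x assume "x \<in> \<pi> \<eta> ` ?Y"
          then obtain \<xi> where \<xi>: "\<xi> \<in> ?Y" "x = \<pi> \<eta> \<xi>" by blast
          have \<xi>u: "\<xi> \<in> under ?s \<eta>" using Yu \<xi>(1) by blast
          have F\<xi>: "F \<xi> \<alpha> = \<pi> \<eta> \<xi>" unfolding F_def using \<alpha> \<xi>u by simp
          have pk: "\<pi> \<eta> \<xi> \<in> Field k" using \<pi>[OF \<eta>(1)] \<xi>u by blast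
          have "\<alpha> \<notin> Bd \<xi>" using na \<xi>(1) by blast
          then have "\<not> ((g \<alpha>, \<pi> \<eta> \<xi>) \<in> k \<and> g \<alpha> \<noteq> \<pi> \<eta> \<xi>)"
            unfolding Bd_def below_set_def using \<alpha>(1) F\<xi> by simp
          then have "(\<pi> \<eta> \<xi>, g \<alpha>) \<in> k"
            using co_total[OF kC g\<alpha> pk] co_refl[OF kC pk] by (cases "g \<alpha> = \<pi> \<eta> \<xi>") auto
          then show "x \<in> under k (g \<alpha>)" unfolding under_def using \<xi>(2) by blast
        qed
        then have 1: "|\<pi> \<eta> ` ?Y| \<le>o |under k (g \<alpha>)|" by (rule card_of_mono1)
        have 2: "|under k (g \<alpha>)| <o k" by (rule under_small[OF kC kI g\<alpha>])
        have "inj_on (\<pi> \<eta>) ?Y" using \<pi>[OF \<eta>(1)] Yu inj_on_subset by blast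
        then have "bij_betw (\<pi> \<eta>) ?Y (\<pi> \<eta> ` ?Y)" by (rule inj_on_imp_bij_betw)
        then have "|?Y| =o |\<pi> \<eta> ` ?Y|" using card_of_ordIso by blast
        then have "k =o |\<pi> \<eta> ` ?Y|" by (rule ordIso_transitive[OF ordIso_symmetric[OF Yk2]])
        then have "k \<le>o |\<pi> \<eta> ` ?Y|" by (rule ordIso_imp_ordLeq)
        then have "k <o k" by (rule ordLeq_ordLess_trans[OF ordLeq_transitive[OF _ 1] 2])
        then show False using ordLess_irreflexive by blast
      qed
    qed
    have Ym: "|?Y| <o m" by (rule ordIso_ordLess_trans[OF Yk2 k_less_m])
    have Ybd: "\<forall>\<xi>\<in>?Y. |Bd \<xi>| \<le>o |under m b|" using \<sigma> h(2) by blast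
    have bm: "b \<in> Field m" using b(1) K(1) by blast
    have Yinf: "infinite ?Y" using card_of_ordIso_finite[OF Yk] kI by simp
    have "|\<Union>\<xi>\<in>?Y. Bd \<xi>| <o m" by (rule union_small[OF mC Ym Ybd under_small[OF mC mI bm] Yinf])
    then have "|A| <o m" by (rule ordLeq_ordLess_trans[OF card_of_mono1[OF AU]])
    then have "|Field m| <o m" by (rule ordLeq_ordLess_trans[OF mA])
    then show False using not_ordLess_ordIso card_of_Field_ordIso[OF mC] by blast
  qed
  show ?thesis unfolding unbounded_family_def using Fin Fcard unb by blast
qed

end

theorem mainTheorem17:
  fixes k :: "'k rel" and m :: "'m rel"
  assumes "Card_order k" and "infinite (Field k)" and "regularCard k"
    and "Card_order m" and "infinite (Field m)" and "\<not> regularCard m"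
    and "cf_is m k"
  shows "bnum_is (le_card k m k) (funs m k) k
    \<and> bnum_is (le_all m k) (funs m k) k
    \<and> bnum_is (le_card m m k) (funs m k) (cardSuc k)
    \<and> bnum_is (le_bd m k) (funs m k) (cardSuc k)"
proof -
  interpret S: S17 k m using assms by (unfold_locales)
  obtain Fm where Fm: "unbounded_family (le_card m m k) (funs m k) Fm" "|Fm| \<le>o cardSuc k"
    using S.fam_exists by blast
  have 1: "bnum_is (le_card k m k) (funs m k) k"
    by (rule bnum_intro[OF assms(1) S.lower_k S.C_unb S.C_card])
  have 2: "bnum_is (le_all m k) (funs m k) k"
    by (rule bnum_intro[OF assms(1) S.lower_k_all S.C_unb_all S.C_card])
  have 3: "bnum_is (le_card m m k) (funs m k) (cardSuc k)"
    by (rule bnum_intro[OF S.s_facts(1) S.lower_card_m Fm])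
  have 4: "bnum_is (le_bd m k) (funs m k) (cardSuc k)"
    by (rule bnum_intro[OF S.s_facts(1) S.lower_bd S.unb_card_bd[OF Fm(1)] Fm(2)])
  show ?thesis using 1 2 3 4 by blast
qed

end
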